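(* Let $G$ be a countably infinite disconnected IH-homogeneous graph. Then there exist $n,m\in\omega+1$ (each either a positive integer or $\omega$) with $\max\{m,n\}=\omega$ such that $G\cong I_n[K_m]$.
   Context: All graphs are undirected and loopless; subgraphs are induced. $G$ is IH-homogeneous if every isomorphism between finite induced subgraphs of $G$ is the restriction of an endomorphism of $G$ (a map $G\to G$ sending adjacent vertices to adjacent vertices). $K_\kappa$ is the complete graph and $I_\kappa$ the edgeless graph on $\kappa$ vertices; the lexicographic product $G[H]$ has vertex set $G\times H$ with $(g,h)\sim(g',h')$ iff $g\sim g'$, or $g=g'$ and $h\sim h'$; so $I_n[K_m]$ is a disjoint union of $n$ copies of $K_m$. *)

theory Defs
  imports Main "HOL-Library.Extended_Nat" "HOL-Library.Countable_Set"
begin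

definition graph :: "'a set \<Rightarrow> ('a \<Rightarrow> 'a \<Rightarrow> bool) \<Rightarrow> bool" where
  "graph V E \<longleftrightarrow> (\<forall>x y. E x y \<longrightarrow> x \<in> V \<and> y \<in> V \<and> E y x \<and> x \<noteq> y)"

definition endomorphism :: "'a set \<Rightarrow> ('a \<Rightarrow> 'a \<Rightarrow> bool) \<Rightarrow> ('a \<Rightarrow> 'a) \<Rightarrow> bool" where
  "endomorphism V E f \<longleftrightarrow> f ` V \<subseteq> V \<and> (\<forall>x\<in>V. \<forall>y\<in>V. E x y \<longrightarrow> E (f x) (f y))"

definition induced_iso :: "('a \<Rightarrow> 'a \<Rightarrow> bool) \<Rightarrow> 'a set \<Rightarrow> 'a set \<Rightarrow> ('a \<Rightarrow> 'a) \<Rightarrow> bool" where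
  "induced_iso E A B h \<longleftrightarrow> bij_betw h A B \<and> (\<forall>x\<in>A. \<forall>y\<in>A. E x y \<longleftrightarrow> E (h x) (h y))"

definition IH_homogeneous :: "'a set \<Rightarrow> ('a \<Rightarrow> 'a \<Rightarrow> bool) \<Rightarrow> bool" where
  "IH_homogeneous V E \<longleftrightarrow>
     (\<forall>A B h. finite A \<and> finite B \<and> A \<subseteq> V \<and> B \<subseteq> V \<and> induced_iso E A B h \<longrightarrow>
        (\<exists>f. endomorphism V E f \<and> (\<forall>x\<in>A. f x = h x)))"

definition connected_graph :: "'a set \<Rightarrow> ('a \<Rightarrow> 'a \<Rightarrow> bool) \<Rightarrow> bool" where
  "connected_graph V E \<longleftrightarrow> V \<noteq> {} \<and> (\<forall>x\<in>V. \<forall>y\<in>V. E\<^sup>*\<^sup>* x y)"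

definition graph_iso :: "'a set \<Rightarrow> ('a \<Rightarrow> 'a \<Rightarrow> bool) \<Rightarrow> 'b set \<Rightarrow> ('b \<Rightarrow> 'b \<Rightarrow> bool) \<Rightarrow> bool" where
  "graph_iso V E W F \<longleftrightarrow> (\<exists>f. bij_betw f V W \<and> (\<forall>x\<in>V. \<forall>y\<in>V. E x y \<longleftrightarrow> F (f x) (f y)))"

text \<open>Vertex set {0,1,...} of size \<kappa> \<in> \<omega>+1 (here \<kappa> :: enat, \<infinity> = \<omega>).\<close>
definition card_verts :: "enat \<Rightarrow> nat set" where
  "card_verts \<kappa> = {i. enat i < \<kappa>}"

definition K_edges :: "nat \<Rightarrow> nat \<Rightarrow> bool" where "K_edges i j \<longleftrightarrow> i \<noteq> j"
definition I_edges :: "nat \<Rightarrow> nat \<Rightarrow> bool" where "I_edges i j \<longleftrightarrow> False"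

definition lex_verts :: "'a set \<Rightarrow> 'b set \<Rightarrow> ('a \<times> 'b) set" where
  "lex_verts V W = V \<times> W"
definition lex_edges :: "('a \<Rightarrow> 'a \<Rightarrow> bool) \<Rightarrow> ('b \<Rightarrow> 'b \<Rightarrow> bool) \<Rightarrow> ('a \<times> 'b) \<Rightarrow> ('a \<times> 'b) \<Rightarrow> bool" where
  "lex_edges E F p q \<longleftrightarrow> E (fst p) (fst q) \<or> (fst p = fst q \<and> F (snd p) (snd q))"

end

theory Submission
  imports Defs
begin

definition sz :: "'b set \<Rightarrow> enat" where
  "sz S = (if finite S then enat (card S) else \<infinity>)"

lemma sz_bij:
  assumes "countable S"
  shows "bij_betw (to_nat_on S) S (card_verts (sz S))"
proof (cases "finite S")
  case True
  have "card_verts (sz S) = {..<card S}" using True by (auto simp: sz_def card_verts_def)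
  then show ?thesis using to_nat_on_finite[OF True] by simp
next
  case False
  have "card_verts (sz S) = UNIV" using False by (auto simp: sz_def card_verts_def)
  then show ?thesis using to_nat_on_infinite[OF assms False] by simp
qed

lemma hom_rtrancl:
  assumes g: "graph V E" and f: "endomorphism V E f"
  shows "E\<^sup>*\<^sup>* x y \<Longrightarrow> x \<in> V \<Longrightarrow> E\<^sup>*\<^sup>* (f x) (f y)"
proof (induction rule: rtranclp_induct)
  case base then show ?case by simp
next
  case (step y z)
  have "y \<in> V" "z \<in> V" using step(2) g unfolding graph_def by blast+
  then have "E (f y) (f z)" using f step(2) unfolding endomorphism_def by blast
  then show ?case using step by (meson rtranclp.rtrancl_into_rtrancl)
qed

theorem lemma3p1:
  fixes V :: "'a set" and E :: "'a \<Rightarrow> 'a \<Rightarrow> bool"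
  assumes "graph V E"
    and "countable V" and "infinite V"
    and "\<not> connected_graph V E"
    and "IH_homogeneous V E"
  shows "\<exists>n m :: enat. n \<ge> 1 \<and> m \<ge> 1 \<and> max n m = \<infinity> \<and>
           graph_iso V E (lex_verts (card_verts n) (card_verts m)) (lex_edges I_edges K_edges)"
proof -
  note g = assms(1) and ih = assms(5)
  have Esym: "E y x" if "E x y" for x y using g that unfolding graph_def by blast
  have Eirr: "\<not> E x x" for x using g unfolding graph_def by blast
  have EV: "x \<in> V" "y \<in> V" if "E x y" for x y using g that unfolding graph_def by blast+
  have Vne: "V \<noteq> {}" using assms(3) by auto
  have other: "\<exists>w\<in>V. \<not> E\<^sup>*\<^sup>* x w" if "x \<in> V" for x
  proof (rule ccontr)
    assume "\<not> ?thesis"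
    then have all: "\<forall>w\<in>V. E\<^sup>*\<^sup>* x w" by blast
    have symr: "E\<^sup>*\<^sup>* b a" if "E\<^sup>*\<^sup>* a b" for a b
      using that by (induction rule: rtranclp_induct)
        (auto intro: converse_rtranclp_into_rtranclp Esym)
    have "connected_graph V E" unfolding connected_graph_def
      using Vne all symr by (meson rtranclp_trans)
    then show False using assms(4) by blast
  qed
  have key: "x = y \<or> E x y" if hk: "x \<in> V" "y \<in> V" "E\<^sup>*\<^sup>* x y" for x y
  proof (rule ccontr)
    assume nn: "\<not> (x = y \<or> E x y)"
    obtain w where w: "w \<in> V" "\<not> E\<^sup>*\<^sup>* x w" using other[OF hk(1)] by blast
    have wx: "w \<noteq> x" using w by auto
    have nxw: "\<not> E x w" using w by auto
    define h where "h = (\<lambda>z. if z = y then w else z)"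
    have "induced_iso E {x,y} {x,w} h"
      unfolding induced_iso_def bij_betw_def inj_on_def h_def
      using nn wx nxw Esym Eirr by auto
    then obtain f where f: "endomorphism V E f" "\<forall>z\<in>{x,y}. f z = h z"
      using ih hk unfolding IH_homogeneous_def by (metis empty_subsetI finite.emptyI finite_insert insert_subset w(1))
    have "E\<^sup>*\<^sup>* (f x) (f y)" using hom_rtrancl[OF g f(1) hk(3) hk(1)] .
    moreover have "f x = x" "f y = w" using f(2) nn by (auto simp: h_def)
    ultimately show False using w by simp
  qed
  have trans: "x = z \<or> E x z" if "E x y" "E y z" for x y z
    using key[of x z] that EV by (meson rtranclp.rtrancl_into_rtrancl r_into_rtranclp)
  define comp where "comp x = {y \<in> V. x = y \<or> E x y}" for x
  have comp_self: "x \<in> comp x" if "x \<in> V" for x using that by (simp add: comp_def)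
  have comp_eq: "comp y = comp x" if "y \<in> comp x" for x y
    using that unfolding comp_def using trans Esym by blast
  have comp_iff: "comp x = comp y \<longleftrightarrow> (x = y \<or> E x y)" if "x \<in> V" "y \<in> V" for x y
    using comp_eq comp_self that unfolding comp_def by blast
  have compV: "comp x \<subseteq> V" for x by (auto simp: comp_def)
  have inj: "\<exists>f. inj_on f (comp a) \<and> f ` comp a \<subseteq> comp b" if hab: "a \<in> V" "b \<in> V" for a b
  proof -
    have "induced_iso E {a} {b} (\<lambda>_. b)"
      unfolding induced_iso_def bij_betw_def by (auto simp: Eirr)
    then obtain f where f: "endomorphism V E f" "f a = b"
      using ih hab unfolding IH_homogeneous_def by (metis empty_subsetI finite.emptyI finite_insert insert_subset singletonI)
    have img: "f ` comp a \<subseteq> comp b"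
    proof
      fix z assume "z \<in> f ` comp a"
      then obtain y where y: "y \<in> comp a" "z = f y" by blast
      then have "y \<in> V" "a = y \<or> E a y" by (auto simp: comp_def)
      then show "z \<in> comp b" using f y hab unfolding comp_def endomorphism_def by auto
    qed
    have "inj_on f (comp a)"
    proof (rule inj_onI)
      fix y z assume yz: "y \<in> comp a" "z \<in> comp a" "f y = f z"
      show "y = z"
      proof (rule ccontr)
        assume "y \<noteq> z"
        then have "E y z" using yz comp_eq comp_iff compV by (metis subsetD)
        then have "E (f y) (f z)" using f(1) yz compV unfolding endomorphism_def by blast
        then show False using yz Eirr by simp
      qed
    qed
    then show ?thesis using img by blast
  qed
  obtain a0 where a0: "a0 \<in> V" using Vne by blast
  define m where "m = sz (comp a0)"
  have szc: "sz (comp x) = m" if hx: "x \<in> V" for x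
  proof -
    obtain f1 where f1: "inj_on f1 (comp x)" "f1 ` comp x \<subseteq> comp a0" using inj hx a0 by blast
    obtain f2 where f2: "inj_on f2 (comp a0)" "f2 ` comp a0 \<subseteq> comp x" using inj hx a0 by blast
    show ?thesis
    proof (cases "finite (comp a0)")
      case True
      then have fx: "finite (comp x)" using f1 inj_on_finite by blast
      have "card (comp x) \<le> card (comp a0)" using card_inj_on_le f1 True by blast
      moreover have "card (comp a0) \<le> card (comp x)" using card_inj_on_le f2 fx by blast
      ultimately show ?thesis using True fx by (simp add: m_def sz_def)
    next
      case False
      then have "infinite (comp x)" using f2 inj_on_finite by blast
      then show ?thesis using False by (simp add: m_def sz_def)
    qed
  qed
  define Cs where "Cs = comp ` V"
  define n where "n = sz Cs"
  have cCs: "countable Cs" using assms(2) by (simp add: Cs_def)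
  have ccomp: "countable (comp x)" for x using assms(2) compV countable_subset by blast
  have n1: "n \<ge> 1" using Vne unfolding n_def sz_def Cs_def
    by (auto simp: one_enat_def Suc_le_eq card_gt_0_iff)
  have m1: "m \<ge> 1" using comp_self[OF a0] unfolding m_def sz_def
    by (auto simp: one_enat_def Suc_le_eq card_gt_0_iff)
  have mx: "max n m = \<infinity>"
  proof (rule ccontr)
    assume "max n m \<noteq> \<infinity>"
    then have "finite Cs" "finite (comp a0)" by (auto simp: n_def m_def sz_def split: if_splits)
    moreover have "\<forall>C\<in>Cs. finite C"
      using szc `finite (comp a0)` unfolding Cs_def m_def sz_def by (metis (full_types) enat.distinct(1) imageE)
    moreover have "V = \<Union> Cs" using comp_self compV unfolding Cs_def by blast
    ultimately show False using assms(3) by simp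
  qed
  define gC where "gC = to_nat_on Cs"
  have bC: "bij_betw gC Cs (card_verts n)" unfolding gC_def n_def using sz_bij[OF cCs] .
  have bc: "bij_betw (to_nat_on (comp x)) (comp x) (card_verts m)" if "x \<in> V" for x
    using sz_bij[OF ccomp[of x]] szc[OF that] by simp
  define \<phi> where "\<phi> x = (gC (comp x), to_nat_on (comp x) x)" for x
  have injphi: "inj_on \<phi> V"
  proof (rule inj_onI)
    fix x y assume xy: "x \<in> V" "y \<in> V" "\<phi> x = \<phi> y"
    then have "gC (comp x) = gC (comp y)" by (simp add: \<phi>_def)
    then have ce: "comp x = comp y" using bC xy unfolding bij_betw_def inj_on_def Cs_def by blast
    then have "to_nat_on (comp x) x = to_nat_on (comp x) y" using xy by (simp add: \<phi>_def)
    moreover have "y \<in> comp x" using ce comp_self xy by simp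
    ultimately show "x = y" using bc[OF xy(1)] comp_self[OF xy(1)]
      unfolding bij_betw_def inj_on_def by blast
  qed
  have imgphi: "\<phi> ` V = card_verts n \<times> card_verts m"
  proof
    show "\<phi> ` V \<subseteq> card_verts n \<times> card_verts m"
    proof
      fix p assume "p \<in> \<phi> ` V"
      then obtain x where x: "x \<in> V" "p = \<phi> x" by blast
      have "gC (comp x) \<in> card_verts n" using bC x unfolding bij_betw_def Cs_def by blast
      moreover have "to_nat_on (comp x) x \<in> card_verts m" using bc[OF x(1)] comp_self[OF x(1)]
        unfolding bij_betw_def by blast
      ultimately show "p \<in> card_verts n \<times> card_verts m" using x by (simp add: \<phi>_def)
    qed
  next
    show "card_verts n \<times> card_verts m \<subseteq> \<phi> ` V"
    proof
      fix p assume "p \<in> card_verts n \<times> card_verts m"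
      then obtain i j where ij: "p = (i,j)" "i \<in> card_verts n" "j \<in> card_verts m" by blast
      obtain C where C: "C \<in> Cs" "gC C = i" using bC ij unfolding bij_betw_def by (metis imageE)
      obtain a where a: "a \<in> V" "C = comp a" using C unfolding Cs_def by blast
      obtain x where x: "x \<in> comp a" "to_nat_on (comp a) x = j" using bc[OF a(1)] ij
        unfolding bij_betw_def by (metis imageE)
      have "comp x = comp a" using comp_eq x by blast
      moreover have "x \<in> V" using x compV by blast
      ultimately have "\<phi> x = p" using x C a ij unfolding \<phi>_def by simp
      then show "p \<in> \<phi> ` V" using \<open>x \<in> V\<close> by blast
    qed
  qed
  have edges: "E x y \<longleftrightarrow> lex_edges I_edges K_edges (\<phi> x) (\<phi> y)" if "x \<in> V" "y \<in> V" for x y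
  proof -
    have "lex_edges I_edges K_edges (\<phi> x) (\<phi> y) \<longleftrightarrow>
          gC (comp x) = gC (comp y) \<and> to_nat_on (comp x) x \<noteq> to_nat_on (comp y) y"
      by (simp add: lex_edges_def I_edges_def K_edges_def \<phi>_def)
    also have "\<dots> \<longleftrightarrow> comp x = comp y \<and> x \<noteq> y"
    proof
      assume h: "gC (comp x) = gC (comp y) \<and> to_nat_on (comp x) x \<noteq> to_nat_on (comp y) y"
      then have "comp x = comp y" using bC that unfolding bij_betw_def inj_on_def Cs_def by blast
      then show "comp x = comp y \<and> x \<noteq> y" using h by auto
    next
      assume h: "comp x = comp y \<and> x \<noteq> y"
      have "y \<in> comp x" using h comp_self that by simp
      then have "to_nat_on (comp x) x \<noteq> to_nat_on (comp x) y"
        using h bc[OF that(1)] comp_self[OF that(1)] unfolding bij_betw_def inj_on_def by blast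
      then show "gC (comp x) = gC (comp y) \<and> to_nat_on (comp x) x \<noteq> to_nat_on (comp y) y"
        using h by simp
    qed
    also have "\<dots> \<longleftrightarrow> E x y" using comp_iff[OF that] Eirr by auto
    finally show ?thesis by simp
  qed
  have "graph_iso V E (lex_verts (card_verts n) (card_verts m)) (lex_edges I_edges K_edges)"
    unfolding graph_iso_def lex_verts_def
    using injphi imgphi edges by (intro exI[of _ \<phi>]) (auto simp: bij_betw_def)
  then show ?thesis using n1 m1 mx by blast
qed

end
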